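(* Let $A_1,\dots,A_N$ be trace class self-adjoint operators on a (separable) Hilbert space $\mathcal H$ with $\mathrm{Tr}\,A_i=0$ for each $1\le i\le N$. Suppose the joint numerical range $\{(\langle z,A_1z\rangle,\dots,\langle z,A_Nz\rangle): z\in\mathcal H,\ \|z\|=1\}$ is a convex subset of $\mathbb R^N$. Then there exists $z\in\mathcal H$ with $\|z\|=1$ such that $\langle z,A_iz\rangle=0$ for all $i=1,\dots,N$. *)

theory Defs
  imports "HOL-Analysis.Analysis"
begin

text \<open>Concrete model of a separable complex Hilbert space: every separable Hilbert
space is unitarily isomorphic to l2(D) for some index set D of naturals
(D = {..<n} in dimension n, D = UNIV in infinite dimension).\<close>

definition l2 :: "nat set \<Rightarrow> (nat \<Rightarrow> complex) set" where
  "l2 D = {x. (\<forall>k. k \<notin> D \<longrightarrow> x k = 0) \<and> (\<lambda>k. (cmod (x k))^2) summable_on D}"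

definition cinner :: "nat set \<Rightarrow> (nat \<Rightarrow> complex) \<Rightarrow> (nat \<Rightarrow> complex) \<Rightarrow> complex" where
  "cinner D x y = (\<Sum>\<^sub>\<infinity>k\<in>D. cnj (x k) * y k)"

definition l2norm :: "nat set \<Rightarrow> (nat \<Rightarrow> complex) \<Rightarrow> real" where
  "l2norm D x = sqrt (\<Sum>\<^sub>\<infinity>k\<in>D. (cmod (x k))^2)"

definition basis_vec :: "nat \<Rightarrow> (nat \<Rightarrow> complex)" where
  "basis_vec k = (\<lambda>j. if j = k then 1 else 0)"

text \<open>Bounded linear operators on l2(D) (only their values on l2(D) matter).\<close>
definition bounded_op :: "nat set \<Rightarrow> ((nat \<Rightarrow> complex) \<Rightarrow> (nat \<Rightarrow> complex)) \<Rightarrow> bool" where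
  "bounded_op D A \<longleftrightarrow>
     (\<forall>x\<in>l2 D. A x \<in> l2 D) \<and>
     (\<forall>x\<in>l2 D. \<forall>y\<in>l2 D. A (\<lambda>k. x k + y k) = (\<lambda>k. A x k + A y k)) \<and>
     (\<forall>x\<in>l2 D. \<forall>c. A (\<lambda>k. c * x k) = (\<lambda>k. c * A x k)) \<and>
     (\<exists>K. \<forall>x\<in>l2 D. l2norm D (A x) \<le> K * l2norm D x)"

definition is_adjoint :: "nat set \<Rightarrow> ((nat \<Rightarrow> complex) \<Rightarrow> (nat \<Rightarrow> complex))
     \<Rightarrow> ((nat \<Rightarrow> complex) \<Rightarrow> (nat \<Rightarrow> complex)) \<Rightarrow> bool" where
  "is_adjoint D A B \<longleftrightarrow> (\<forall>x\<in>l2 D. \<forall>y\<in>l2 D. cinner D x (A y) = cinner D (B x) y)"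

definition self_adjoint_op :: "nat set \<Rightarrow> ((nat \<Rightarrow> complex) \<Rightarrow> (nat \<Rightarrow> complex)) \<Rightarrow> bool" where
  "self_adjoint_op D A \<longleftrightarrow> bounded_op D A \<and> is_adjoint D A A"

definition positive_op :: "nat set \<Rightarrow> ((nat \<Rightarrow> complex) \<Rightarrow> (nat \<Rightarrow> complex)) \<Rightarrow> bool" where
  "positive_op D P \<longleftrightarrow> bounded_op D P \<and>
     (\<forall>x\<in>l2 D. Im (cinner D x (P x)) = 0 \<and> Re (cinner D x (P x)) \<ge> 0)"

text \<open>Trace class: Tr |A| < \<infinity>, where |A| is the positive square root of A^* A
(the unique positive P with P P = A^* A).\<close>
definition trace_class :: "nat set \<Rightarrow> ((nat \<Rightarrow> complex) \<Rightarrow> (nat \<Rightarrow> complex)) \<Rightarrow> bool" where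
  "trace_class D A \<longleftrightarrow> bounded_op D A \<and>
     (\<exists>S P. bounded_op D S \<and> is_adjoint D A S \<and> positive_op D P \<and>
        (\<forall>x\<in>l2 D. P (P x) = S (A x)) \<and>
        (\<lambda>k. Re (cinner D (basis_vec k) (P (basis_vec k)))) summable_on D)"

definition op_trace :: "nat set \<Rightarrow> ((nat \<Rightarrow> complex) \<Rightarrow> (nat \<Rightarrow> complex)) \<Rightarrow> complex" where
  "op_trace D A = (\<Sum>\<^sub>\<infinity>k\<in>D. cinner D (basis_vec k) (A (basis_vec k)))"

definition joint_numerical_range :: "nat set \<Rightarrow> ('n::finite \<Rightarrow> ((nat \<Rightarrow> complex) \<Rightarrow> (nat \<Rightarrow> complex)))
     \<Rightarrow> (real^'n) set" where
  "joint_numerical_range D A =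
     {(\<chi> i. Re (cinner D z (A i z))) | z. z \<in> l2 D \<and> l2norm D z = 1}"

end

theory Submission
  imports Defs
begin
lemma l2_out: "x \<in> l2 D \<Longrightarrow> k \<notin> D \<Longrightarrow> x k = 0" by (simp add: l2_def)
lemma l2_summ: "x \<in> l2 D \<Longrightarrow> (\<lambda>k. (cmod (x k))^2) summable_on D" by (simp add: l2_def)

lemma summable_compare:
  fixes f :: "nat \<Rightarrow> 'a::banach" and g :: "nat \<Rightarrow> real"
  assumes "g summable_on A" "\<And>k. k \<in> A \<Longrightarrow> norm (f k) \<le> g k"
  shows "f summable_on A"
proof -
  have "(\<lambda>k. norm (g k)) summable_on A" using assms(1) summable_on_iff_abs_summable_on_real by blast
  then have "(\<lambda>k. norm (f k)) summable_on A"
    by (rule Infinite_Sum.abs_summable_on_comparison_test) (use assms(2) in force)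
  then show ?thesis using abs_summable_summable by blast
qed

lemma cmod_mult_le: "cmod (cnj a * b) \<le> (cmod a)^2 + (cmod b)^2"
proof -
  have "0 \<le> (cmod a - cmod b)^2" by simp
  then have "cmod a * cmod b * 2 \<le> ((cmod a)^2 + (cmod b)^2)"
    by (simp add: power2_diff)
  moreover have "0 \<le> (cmod a)^2 + (cmod b)^2" by simp
  moreover have "cmod (cnj a * b) = cmod a * cmod b" by (simp add: norm_mult)
  ultimately show ?thesis by linarith
qed

lemma cmod_add_sq: "(cmod (a + b))^2 \<le> 2 * (cmod a)^2 + 2 * (cmod b)^2"
proof -
  have "cmod (a+b) \<le> cmod a + cmod b" by (rule norm_triangle_ineq)
  then have "(cmod (a+b))^2 \<le> (cmod a + cmod b)^2"
    by (simp add: power_mono)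
  moreover have "0 \<le> (cmod a - cmod b)^2" by simp
  ultimately show ?thesis by (simp add: power2_sum power2_diff)
qed

lemma ip_summable: "x \<in> l2 D \<Longrightarrow> y \<in> l2 D \<Longrightarrow> (\<lambda>k. cnj (x k) * y k) summable_on D"
  by (rule summable_compare[where g="\<lambda>k. (cmod (x k))^2 + (cmod (y k))^2"])
     (auto intro: summable_on_add l2_summ cmod_mult_le)

lemma l2_add: "x \<in> l2 D \<Longrightarrow> y \<in> l2 D \<Longrightarrow> (\<lambda>k. x k + y k) \<in> l2 D"
  unfolding l2_def
proof (safe)
  assume x: "\<forall>k. k \<notin> D \<longrightarrow> x k = 0" "(\<lambda>k. (cmod (x k))\<^sup>2) summable_on D"
     and y: "\<forall>k. k \<notin> D \<longrightarrow> y k = 0" "(\<lambda>k. (cmod (y k))\<^sup>2) summable_on D"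
  show "\<And>k. k \<notin> D \<Longrightarrow> x k + y k = 0" using x y by simp
  show "(\<lambda>k. (cmod (x k + y k))\<^sup>2) summable_on D"
    by (rule summable_compare[where g="\<lambda>k. 2 * (cmod (x k))^2 + 2 * (cmod (y k))^2"])
       (auto intro!: summable_on_add summable_on_cmult_right x y cmod_add_sq)
qed

lemma l2_scale: "x \<in> l2 D \<Longrightarrow> (\<lambda>k. c * x k) \<in> l2 D"
  unfolding l2_def
  by (auto simp: norm_mult power_mult_distrib intro!: summable_on_cmult_right)

lemma l2_zero: "(\<lambda>k. 0) \<in> l2 D"
  unfolding l2_def by simp

lemma l2_diff: "x \<in> l2 D \<Longrightarrow> y \<in> l2 D \<Longrightarrow> (\<lambda>k. x k - y k) \<in> l2 D"
proof -
  assume "x \<in> l2 D" "y \<in> l2 D"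
  then have "(\<lambda>k. x k + (\<lambda>k. (-1) * y k) k) \<in> l2 D" by (intro l2_add l2_scale)
  then show ?thesis by simp
qed

lemma ip_add_right: "x \<in> l2 D \<Longrightarrow> y \<in> l2 D \<Longrightarrow> z \<in> l2 D \<Longrightarrow>
   cinner D x (\<lambda>k. y k + z k) = cinner D x y + cinner D x z"
  unfolding cinner_def by (simp add: distrib_left infsum_add ip_summable)

lemma ip_scale_right: "cinner D x (\<lambda>k. c * y k) = c * cinner D x y"
  unfolding cinner_def by (simp add: mult.left_commute infsum_cmult_right')

lemma ip_cnj: "cinner D y x = cnj (cinner D x y)"
  unfolding cinner_def by (simp add: infsum_cnj[symmetric] mult.commute)

lemma ip_add_left: "x \<in> l2 D \<Longrightarrow> y \<in> l2 D \<Longrightarrow> z \<in> l2 D \<Longrightarrow>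
   cinner D (\<lambda>k. y k + z k) x = cinner D y x + cinner D z x"
  by (subst (1 2 3) ip_cnj) (simp add: ip_add_right)

lemma ip_scale_left: "cinner D (\<lambda>k. c * y k) x = cnj c * cinner D y x"
  by (subst (1 2) ip_cnj) (simp add: ip_scale_right)

lemma ip_diff_right: "x \<in> l2 D \<Longrightarrow> y \<in> l2 D \<Longrightarrow> z \<in> l2 D \<Longrightarrow>
   cinner D x (\<lambda>k. y k - z k) = cinner D x y - cinner D x z"
proof -
  assume a: "x \<in> l2 D" "y \<in> l2 D" "z \<in> l2 D"
  have "cinner D x (\<lambda>k. y k - z k) = (\<Sum>\<^sub>\<infinity>k\<in>D. cnj (x k) * y k + - (cnj (x k) * z k))"
    unfolding cinner_def by (simp add: algebra_simps)
  also have "\<dots> = cinner D x y + (\<Sum>\<^sub>\<infinity>k\<in>D. - (cnj (x k) * z k))"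
    unfolding cinner_def by (rule infsum_add) (use a in \<open>auto simp: summable_on_uminus intro: ip_summable\<close>)
  also have "\<dots> = cinner D x y - cinner D x z"
    unfolding cinner_def by (simp add: infsum_uminus)
  finally show ?thesis .
qed

lemma ip_diff_left: "x \<in> l2 D \<Longrightarrow> y \<in> l2 D \<Longrightarrow> z \<in> l2 D \<Longrightarrow>
   cinner D (\<lambda>k. y k - z k) x = cinner D y x - cinner D z x"
  by (subst (1 2 3) ip_cnj) (simp add: ip_diff_right)

lemma ip_self: "x \<in> l2 D \<Longrightarrow> cinner D x x = of_real (\<Sum>\<^sub>\<infinity>k\<in>D. (cmod (x k))^2)"
proof -
  assume x: "x \<in> l2 D"
  have "cinner D x x = (\<Sum>\<^sub>\<infinity>k\<in>D. of_real ((cmod (x k))^2))"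
    unfolding cinner_def by (rule infsum_cong) (metis complex_norm_square mult.commute)
  also have "\<dots> = of_real (\<Sum>\<^sub>\<infinity>k\<in>D. (cmod (x k))^2)"
    by (rule infsumI) (use has_sum_of_real[OF has_sum_infsum[OF l2_summ[OF x]]] in simp)
  finally show ?thesis .
qed

lemma ip_self_norm: "x \<in> l2 D \<Longrightarrow> cinner D x x = of_real ((l2norm D x)^2)"
proof -
  assume x: "x \<in> l2 D"
  have "0 \<le> (\<Sum>\<^sub>\<infinity>k\<in>D. (cmod (x k))^2)" by (rule Infinite_Sum.infsum_nonneg) simp
  then show ?thesis using x by (simp add: ip_self l2norm_def)
qed

lemma ip_self_Re: "x \<in> l2 D \<Longrightarrow> Re (cinner D x x) = (l2norm D x)^2"
  by (simp add: ip_self_norm)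

lemma ip_self_Im: "x \<in> l2 D \<Longrightarrow> Im (cinner D x x) = 0"
  by (simp add: ip_self_norm)

lemma ip_self_nonneg: "x \<in> l2 D \<Longrightarrow> 0 \<le> Re (cinner D x x)"
  by (simp add: ip_self_Re)

lemma ip_self_zero: "x \<in> l2 D \<Longrightarrow> cinner D x x = 0 \<Longrightarrow> x = (\<lambda>k. 0)"
proof -
  assume x: "x \<in> l2 D" and z: "cinner D x x = 0"
  have s: "(\<Sum>\<^sub>\<infinity>k\<in>D. (cmod (x k))^2) = 0" using z ip_self[OF x] by simp
  show ?thesis
  proof
    fix k
    show "x k = 0"
    proof (cases "k \<in> D")
      case True
      have "(cmod (x k))^2 = 0"
        by (rule nonneg_infsum_le_0D[where f="\<lambda>k. (cmod (x k))^2" and A=D]) (use s l2_summ[OF x] True in auto)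
      then show ?thesis by simp
    next
      case False then show ?thesis using l2_out[OF x] by simp
    qed
  qed
qed

lemma l2norm_nonneg: "0 \<le> l2norm D x"
  unfolding l2norm_def by (simp add: Infinite_Sum.infsum_nonneg)

definition lop :: "nat set \<Rightarrow> ((nat \<Rightarrow> complex) \<Rightarrow> (nat \<Rightarrow> complex)) \<Rightarrow> bool" where
  "lop D T \<longleftrightarrow> (\<forall>x\<in>l2 D. T x \<in> l2 D) \<and>
     (\<forall>x\<in>l2 D. \<forall>y\<in>l2 D. T (\<lambda>k. x k + y k) = (\<lambda>k. T x k + T y k)) \<and>
     (\<forall>x\<in>l2 D. \<forall>c. T (\<lambda>k. c * x k) = (\<lambda>k. c * T x k))"

definition sa :: "nat set \<Rightarrow> ((nat \<Rightarrow> complex) \<Rightarrow> (nat \<Rightarrow> complex)) \<Rightarrow> bool" where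
  "sa D T \<longleftrightarrow> lop D T \<and> (\<forall>x\<in>l2 D. \<forall>y\<in>l2 D. cinner D x (T y) = cinner D (T x) y)"

definition psd :: "nat set \<Rightarrow> ((nat \<Rightarrow> complex) \<Rightarrow> (nat \<Rightarrow> complex)) \<Rightarrow> bool" where
  "psd D T \<longleftrightarrow> sa D T \<and> (\<forall>x\<in>l2 D. 0 \<le> Re (cinner D x (T x)))"

lemma lop_mem: "lop D T \<Longrightarrow> x \<in> l2 D \<Longrightarrow> T x \<in> l2 D" by (simp add: lop_def)
lemma lop_add: "lop D T \<Longrightarrow> x \<in> l2 D \<Longrightarrow> y \<in> l2 D \<Longrightarrow> T (\<lambda>k. x k + y k) = (\<lambda>k. T x k + T y k)"
  by (simp add: lop_def)
lemma lop_scale: "lop D T \<Longrightarrow> x \<in> l2 D \<Longrightarrow> T (\<lambda>k. c * x k) = (\<lambda>k. c * T x k)"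
  by (simp add: lop_def)
lemma lop_diff: "lop D T \<Longrightarrow> x \<in> l2 D \<Longrightarrow> y \<in> l2 D \<Longrightarrow> T (\<lambda>k. x k - y k) = (\<lambda>k. T x k - T y k)"
proof -
  assume a: "lop D T" "x \<in> l2 D" "y \<in> l2 D"
  have "T (\<lambda>k. x k + (\<lambda>k. (-1) * y k) k) = (\<lambda>k. T x k + T (\<lambda>k. (-1) * y k) k)"
    using a by (intro lop_add l2_scale)
  also have "T (\<lambda>k. (-1) * y k) = (\<lambda>k. (-1) * T y k)" using a by (intro lop_scale)
  finally show ?thesis by simp
qed
lemma lop_zero: "lop D T \<Longrightarrow> T (\<lambda>k. 0) = (\<lambda>k. 0)"
  using lop_scale[of D T "\<lambda>k. 0" 0] l2_zero by simp

lemma sa_lop: "sa D T \<Longrightarrow> lop D T" by (simp add: sa_def)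
lemma sa_ip: "sa D T \<Longrightarrow> x \<in> l2 D \<Longrightarrow> y \<in> l2 D \<Longrightarrow> cinner D x (T y) = cinner D (T x) y"
  by (simp add: sa_def)
lemma psd_sa: "psd D T \<Longrightarrow> sa D T" by (simp add: psd_def)
lemma psd_nonneg: "psd D T \<Longrightarrow> x \<in> l2 D \<Longrightarrow> 0 \<le> Re (cinner D x (T x))" by (simp add: psd_def)

lemma sa_real: "sa D T \<Longrightarrow> x \<in> l2 D \<Longrightarrow> Im (cinner D x (T x)) = 0"
proof -
  assume a: "sa D T" "x \<in> l2 D"
  have "cinner D x (T x) = cinner D (T x) x" using a sa_ip by blast
  also have "\<dots> = cnj (cinner D x (T x))" by (rule ip_cnj)
  finally have "cinner D x (T x) = cnj (cinner D x (T x))" .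
  then show ?thesis by (metis cnj.simps(2) complex.sel(2) equation_minus_iff neg_equal_zero)
qed

lemma sa_real': "sa D T \<Longrightarrow> x \<in> l2 D \<Longrightarrow> cinner D x (T x) = of_real (Re (cinner D x (T x)))"
  using sa_real by (simp add: complex_eq_iff)

lemma lop_id: "lop D (\<lambda>x. x)" by (simp add: lop_def)
lemma sa_id: "sa D (\<lambda>x. x)" by (simp add: sa_def lop_id)
lemma psd_id: "psd D (\<lambda>x. x)" by (simp add: psd_def sa_id ip_self_nonneg)

lemma lop_comp: "lop D T \<Longrightarrow> lop D S \<Longrightarrow> lop D (\<lambda>x. T (S x))"
  unfolding lop_def by (auto)

lemma lop_sub: "lop D T \<Longrightarrow> lop D S \<Longrightarrow> lop D (\<lambda>x k. T x k - S x k)"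
  unfolding lop_def by (auto simp: l2_diff algebra_simps)

lemma lop_plus: "lop D T \<Longrightarrow> lop D S \<Longrightarrow> lop D (\<lambda>x k. T x k + S x k)"
  unfolding lop_def by (auto simp: l2_add algebra_simps)

lemma lop_smul: "lop D T \<Longrightarrow> lop D (\<lambda>x k. c * T x k)"
  unfolding lop_def by (auto simp: l2_scale algebra_simps)

lemma sa_sub: "sa D T \<Longrightarrow> sa D S \<Longrightarrow> sa D (\<lambda>x k. T x k - S x k)"
  unfolding sa_def by (auto simp: lop_sub ip_diff_right ip_diff_left lop_mem)

lemma sa_plus: "sa D T \<Longrightarrow> sa D S \<Longrightarrow> sa D (\<lambda>x k. T x k + S x k)"
  unfolding sa_def by (auto simp: lop_plus ip_add_right ip_add_left lop_mem)

lemma sa_smul: "sa D T \<Longrightarrow> sa D (\<lambda>x k. of_real r * T x k)"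
  unfolding sa_def by (auto simp: lop_smul ip_scale_right ip_scale_left)

lemma sa_neg: "sa D T \<Longrightarrow> sa D (\<lambda>x k. - T x k)"
  using sa_smul[of D T "-1"] by simp

lemma sa_comp: "sa D T \<Longrightarrow> sa D S \<Longrightarrow> (\<And>x. x \<in> l2 D \<Longrightarrow> T (S x) = S (T x)) \<Longrightarrow> sa D (\<lambda>x. T (S x))"
  unfolding sa_def by (auto simp: lop_comp lop_mem)

lemma form_expand:
  assumes T: "sa D T" and x: "x \<in> l2 D" and y: "y \<in> l2 D"
  shows "Re (cinner D (\<lambda>k. x k + s * y k) (T (\<lambda>k. x k + s * y k))) =
         Re (cinner D x (T x)) + 2 * Re (s * cinner D x (T y)) + (cmod s)^2 * Re (cinner D y (T y))"
proof -
  have L: "lop D T" using T sa_lop by blast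
  have sy: "(\<lambda>k. s * y k) \<in> l2 D" using y l2_scale by blast
  have Tz: "T (\<lambda>k. x k + s * y k) = (\<lambda>k. T x k + s * T y k)"
    using lop_add[OF L x sy] lop_scale[OF L y] by simp
  have Tx: "T x \<in> l2 D" and Ty: "T y \<in> l2 D" using L x y lop_mem by auto
  have sTy: "(\<lambda>k. s * T y k) \<in> l2 D" using Ty l2_scale by blast
  have "cinner D (\<lambda>k. x k + s * y k) (\<lambda>k. T x k + s * T y k)
      = cinner D x (\<lambda>k. T x k + s * T y k) + cinner D (\<lambda>k. s * y k) (\<lambda>k. T x k + s * T y k)"
    using ip_add_left[OF l2_add[OF Tx sTy] x sy] by simp
  also have "\<dots> = cinner D x (T x) + s * cinner D x (T y) + cnj s * (cinner D y (T x) + s * cinner D y (T y))"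
    using x y Tx sTy by (simp add: ip_add_right ip_scale_right ip_scale_left)
  finally have e: "cinner D (\<lambda>k. x k + s * y k) (T (\<lambda>k. x k + s * y k)) =
     cinner D x (T x) + s * cinner D x (T y) + cnj s * (cnj (cinner D x (T y)) + s * cinner D y (T y))"
    using Tz sa_ip[OF T y x] ip_cnj[of D "T y" x] by simp
  have r: "cinner D y (T y) = of_real (Re (cinner D y (T y)))" using sa_real'[OF T y] .
  have cs: "cnj s * s = of_real ((cmod s)^2)" by (metis complex_norm_square mult.commute)
  define a where "a = cinner D x (T y)"
  define q where "q = Re (cinner D y (T y))"
  have "cnj s * (cnj a + s * of_real q) = cnj (s * a) + (cnj s * s) * of_real q"
    by (simp add: algebra_simps)
  also have "\<dots> = cnj (s * a) + of_real ((cmod s)^2 * q)" by (simp only: cs of_real_mult)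
  finally have e3: "Re (cnj s * (cnj a + s * of_real q)) = Re (s * a) + (cmod s)^2 * q"
    by (simp only: plus_complex.sel Re_complex_of_real complex_cnj_mult cnj.sel) simp
  show ?thesis unfolding e apply (subst r) using e3 unfolding a_def q_def by simp
qed

lemma quad_aux:
  fixes p q b :: real
  assumes "0 \<le> q" "0 \<le> b" "\<And>t. 0 \<le> p - 2 * t * b + t^2 * b * q"
  shows "b \<le> p * q"
proof (cases "q = 0")
  case True
  show ?thesis
  proof (rule ccontr)
    assume "\<not> b \<le> p * q"
    then have b: "b > 0" using True by simp
    have "0 \<le> p - 2 * ((p+1)/(2*b)) * b + ((p+1)/(2*b))^2 * b * q" by (rule assms(3))
    then show False using b True by (simp add: field_simps)
  qed
next
  case False
  then have q: "q > 0" using assms(1) by simp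
  have "0 \<le> p - 2 * (1/q) * b + (1/q)^2 * b * q" by (rule assms(3))
  then have "0 \<le> p - b / q" using q by (simp add: power2_eq_square field_simps)
  then show ?thesis using q by (simp add: field_simps)
qed

lemma psd_cs:
  assumes T: "psd D T" and x: "x \<in> l2 D" and y: "y \<in> l2 D"
  shows "(cmod (cinner D x (T y)))^2 \<le> Re (cinner D x (T x)) * Re (cinner D y (T y))"
proof -
  let ?a = "cinner D x (T y)"
  have S: "sa D T" using T psd_sa by blast
  have "0 \<le> Re (cinner D x (T x)) - 2 * t * (cmod ?a)^2 + t^2 * (cmod ?a)^2 * Re (cinner D y (T y))" for t
  proof -
    let ?s = "- (of_real t * cnj ?a)"
    have z: "(\<lambda>k. x k + ?s * y k) \<in> l2 D" using x y by (intro l2_add l2_scale)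
    have "0 \<le> Re (cinner D (\<lambda>k. x k + ?s * y k) (T (\<lambda>k. x k + ?s * y k)))"
      using psd_nonneg[OF T z] .
    also have "\<dots> = Re (cinner D x (T x)) + 2 * Re (?s * ?a) + (cmod ?s)^2 * Re (cinner D y (T y))"
      by (rule form_expand[OF S x y])
    also have "Re (?s * ?a) = - t * (cmod ?a)^2"
    proof -
      have ca: "cnj ?a * ?a = of_real ((cmod ?a)^2)" by (metis complex_norm_square mult.commute)
      have "?s * ?a = - (of_real t * (cnj ?a * ?a))" by (simp add: algebra_simps)
      also have "\<dots> = - of_real (t * (cmod ?a)^2)" by (simp only: ca of_real_mult)
      finally have e2: "?s * ?a = - of_real (t * (cmod ?a)^2)" .
      show ?thesis unfolding e2 of_real_minus[symmetric] Re_complex_of_real by simp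
    qed
    also have "(cmod ?s)^2 = t^2 * (cmod ?a)^2"
      by (simp add: norm_mult power_mult_distrib)
    finally show ?thesis by (simp add: algebra_simps)
  qed
  then show ?thesis
    by (intro quad_aux) (auto intro: psd_nonneg[OF T y])
qed

lemma psd_kernel:
  assumes T: "psd D T" and y: "y \<in> l2 D" and z: "Re (cinner D y (T y)) = 0"
  shows "T y = (\<lambda>k. 0)"
proof -
  have L: "lop D T" using T psd_sa sa_lop by blast
  have Ty: "T y \<in> l2 D" using lop_mem[OF L y] .
  have "(cmod (cinner D (T y) (T y)))^2 \<le> Re (cinner D (T y) (T (T y))) * Re (cinner D y (T y))"
    by (rule psd_cs[OF T Ty y])
  then have "cmod (cinner D (T y) (T y)) = 0" using z by simp
  then show ?thesis using ip_self_zero[OF Ty] by simp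
qed

lemma ip_cs: "x \<in> l2 D \<Longrightarrow> y \<in> l2 D \<Longrightarrow> cmod (cinner D x y) \<le> l2norm D x * l2norm D y"
proof -
  assume x: "x \<in> l2 D" and y: "y \<in> l2 D"
  have "(cmod (cinner D x y))^2 \<le> Re (cinner D x x) * Re (cinner D y y)"
    using psd_cs[OF psd_id x y] by simp
  also have "\<dots> = (l2norm D x * l2norm D y)^2" using x y by (simp add: ip_self_Re power_mult_distrib)
  finally show ?thesis
    by (meson l2norm_nonneg mult_nonneg_nonneg power2_le_imp_le)
qed

lemma psd_cs': 
  assumes T: "psd D T" and x: "x \<in> l2 D" and y: "y \<in> l2 D"
  shows "cmod (cinner D x (T y)) \<le> sqrt (Re (cinner D x (T x))) * sqrt (Re (cinner D y (T y)))"
  using psd_cs[OF assms] psd_nonneg[OF T x] psd_nonneg[OF T y]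
  by (metis norm_ge_zero real_le_rsqrt real_sqrt_mult)

lemma step_pos:
  assumes R: "sa D R" and x: "x \<in> l2 D"
    and b: "\<And>z. z \<in> l2 D \<Longrightarrow> 0 \<le> Re (cinner D z (R z)) \<and> Re (cinner D z (R z)) \<le> Re (cinner D z z)"
  shows "0 \<le> Re (cinner D x (R x)) - Re (cinner D (R x) (R x))"
proof -
  have L: "lop D R" using R sa_lop by blast
  define y where "y = R x"
  have y: "y \<in> l2 D" unfolding y_def using L x lop_mem by blast
  have Ry: "R y \<in> l2 D" using L y lop_mem by blast
  define w where "w = (\<lambda>k. x k - y k)"
  have w: "w \<in> l2 D" unfolding w_def using x y l2_diff by blast
  have Rw: "R w = (\<lambda>k. R x k - R y k)" unfolding w_def using lop_diff[OF L x y] .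
  have "cinner D w (R w) = cinner D w y - cinner D w (R y)"
    unfolding Rw y_def[symmetric] using ip_diff_right[OF w y Ry] .
  also have "\<dots> = (cinner D x y - cinner D y y) - (cinner D x (R y) - cinner D y (R y))"
    unfolding w_def using x y Ry by (simp add: ip_diff_left)
  also have "cinner D x (R y) = cinner D y y" unfolding y_def using sa_ip[OF R x] L x lop_mem by blast
  finally have e: "cinner D w (R w) = cinner D x y - 2 * cinner D y y + cinner D y (R y)" by simp
  have "0 \<le> Re (cinner D w (R w))" using b[OF w] by blast
  moreover have "0 \<le> Re (cinner D y y) - Re (cinner D y (R y))" using b[OF y] by simp
  ultimately show ?thesis using e unfolding y_def by simp
qed

primrec rn :: "((nat \<Rightarrow> complex) \<Rightarrow> (nat \<Rightarrow> complex)) \<Rightarrow> nat \<Rightarrow> ((nat \<Rightarrow> complex) \<Rightarrow> (nat \<Rightarrow> complex))" where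
  "rn S 0 = S"
| "rn S (Suc n) = (\<lambda>x k. rn S n x k - rn S n (rn S n x) k)"

lemma rn_sa: "sa D S \<Longrightarrow> sa D (rn S n)"
proof (induction n)
  case 0 then show ?case by simp
next
  case (Suc n)
  have "sa D (\<lambda>x. rn S n (rn S n x))" by (rule sa_comp[OF Suc.IH[OF Suc.prems] Suc.IH[OF Suc.prems]]) simp
  then show ?case using sa_sub[OF Suc.IH[OF Suc.prems]] by simp
qed

lemma rn_comm:
  assumes S: "sa D S" and B: "lop D B" and c: "\<And>x. x \<in> l2 D \<Longrightarrow> B (S x) = S (B x)"
  shows "x \<in> l2 D \<Longrightarrow> B (rn S n x) = rn S n (B x)"
proof (induction n arbitrary: x)
  case 0 then show ?case using c by simp
next
  case (Suc n)
  have L: "lop D (rn S n)" using rn_sa[OF S] sa_lop by blast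
  have m: "rn S n x \<in> l2 D" "rn S n (rn S n x) \<in> l2 D" using L Suc.prems lop_mem by blast+
  have "B (rn S (Suc n) x) = (\<lambda>k. B (rn S n x) k - B (rn S n (rn S n x)) k)"
    using lop_diff[OF B m] by simp
  also have "\<dots> = (\<lambda>k. rn S n (B x) k - rn S n (rn S n (B x)) k)"
    using Suc.IH[OF Suc.prems] Suc.IH[OF m(1)] by simp
  finally show ?case by simp
qed

lemma rn_bounds:
  assumes S: "sa D S"
    and b: "\<And>z. z \<in> l2 D \<Longrightarrow> 0 \<le> Re (cinner D z (S z)) \<and> Re (cinner D z (S z)) \<le> Re (cinner D z z)"
  shows "z \<in> l2 D \<Longrightarrow> 0 \<le> Re (cinner D z (rn S n z)) \<and> Re (cinner D z (rn S n z)) \<le> Re (cinner D z z)"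
proof (induction n arbitrary: z)
  case 0 then show ?case using b by simp
next
  case (Suc n)
  have R: "sa D (rn S n)" using rn_sa[OF S] .
  have L: "lop D (rn S n)" using R sa_lop by blast
  have m: "rn S n z \<in> l2 D" "rn S n (rn S n z) \<in> l2 D" using L Suc.prems lop_mem by blast+
  have e: "cinner D z (rn S (Suc n) z) = cinner D z (rn S n z) - cinner D (rn S n z) (rn S n z)"
    using ip_diff_right[OF Suc.prems m] sa_ip[OF R Suc.prems m(1)] by simp
  have p: "0 \<le> Re (cinner D z (rn S n z)) - Re (cinner D (rn S n z) (rn S n z))"
    by (rule step_pos[OF R Suc.prems]) (use Suc.IH in blast)
  have q: "0 \<le> Re (cinner D (rn S n z) (rn S n z))" using ip_self_nonneg[OF m(1)] .
  show ?case using e p q Suc.IH[OF Suc.prems] by simp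
qed

lemma rn_telescope:
  assumes S: "sa D S" and x: "x \<in> l2 D"
  shows "cinner D x (S x) = (\<Sum>j<n. cinner D (rn S j x) (rn S j x)) + cinner D x (rn S n x)"
proof (induction n)
  case 0 then show ?case by simp
next
  case (Suc n)
  have R: "sa D (rn S n)" using rn_sa[OF S] .
  have L: "lop D (rn S n)" using R sa_lop by blast
  have m: "rn S n x \<in> l2 D" "rn S n (rn S n x) \<in> l2 D" using L x lop_mem by blast+
  have e: "cinner D x (rn S (Suc n) x) = cinner D x (rn S n x) - cinner D (rn S n x) (rn S n x)"
    using ip_diff_right[OF x m] sa_ip[OF R x m(1)] by simp
  show ?case using Suc.IH e by simp
qed

lemma rn_telescope_B:
  assumes S: "sa D S" and x: "x \<in> l2 D" and B: "sa D B"
    and c: "\<And>x. x \<in> l2 D \<Longrightarrow> B (S x) = S (B x)"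
  shows "cinner D x (B (S x)) = (\<Sum>j<n. cinner D (rn S j x) (B (rn S j x))) + cinner D x (B (rn S n x))"
proof (induction n)
  case 0 then show ?case by simp
next
  case (Suc n)
  have R: "sa D (rn S n)" using rn_sa[OF S] .
  have L: "lop D (rn S n)" using R sa_lop by blast
  have LB: "lop D B" using B sa_lop by blast
  have m: "rn S n x \<in> l2 D" "rn S n (rn S n x) \<in> l2 D" using L x lop_mem by blast+
  have Bm: "B (rn S n x) \<in> l2 D" "B (rn S n (rn S n x)) \<in> l2 D" using LB m lop_mem by blast+
  have cm: "B (rn S n (rn S n x)) = rn S n (B (rn S n x))"
    using rn_comm[OF S LB c m(1)] .
  have "cinner D x (B (rn S (Suc n) x)) = cinner D x (\<lambda>k. B (rn S n x) k - B (rn S n (rn S n x)) k)"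
    using lop_diff[OF LB m] by simp
  also have "\<dots> = cinner D x (B (rn S n x)) - cinner D x (B (rn S n (rn S n x)))"
    using ip_diff_right[OF x Bm] .
  also have "cinner D x (B (rn S n (rn S n x))) = cinner D (rn S n x) (B (rn S n x))"
    unfolding cm by (rule sa_ip[OF R x Bm(1)])
  finally show ?case using Suc.IH by simp
qed

lemma small_term:
  fixes a :: "nat \<Rightarrow> real"
  assumes nn: "\<And>j. 0 \<le> a j" and bd: "\<And>n. (\<Sum>j<n. a j) \<le> C" and e: "0 < e"
  shows "\<exists>j. a j < e"
proof (rule ccontr)
  assume "\<not> ?thesis"
  then have ge: "\<And>j. e \<le> a j" by (simp add: not_less)
  obtain n :: nat where n: "C / e < real n" using reals_Archimedean2 by blast
  have "real n * e \<le> (\<Sum>j<n. a j)"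
    using sum_mono[of "{..<n}" "\<lambda>j. e" a] ge by simp
  also have "\<dots> \<le> C" by (rule bd)
  finally have "real n * e \<le> C" .
  moreover have "C < real n * e" using n e by (simp add: field_simps)
  ultimately show False by simp
qed

lemma product_pos_scaled:
  assumes S: "sa D S"
    and b: "\<And>z. z \<in> l2 D \<Longrightarrow> 0 \<le> Re (cinner D z (S z)) \<and> Re (cinner D z (S z)) \<le> Re (cinner D z z)"
    and B: "sa D B" and c: "\<And>x. x \<in> l2 D \<Longrightarrow> B (S x) = S (B x)"
    and x: "x \<in> l2 D"
    and Bpos: "\<And>z. z \<in> l2 D \<Longrightarrow> 0 \<le> Re (cinner D z (B z))"
  shows "0 \<le> Re (cinner D x (B (S x)))"
proof -
  have LB: "lop D B" using B sa_lop by blast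
  have Bx: "B x \<in> l2 D" using LB x lop_mem by blast
  let ?a = "\<lambda>j. Re (cinner D (rn S j x) (rn S j x))"
  have mem: "rn S j x \<in> l2 D" for j using rn_sa[OF S] sa_lop lop_mem x by blast
  have bd: "(\<Sum>j<n. ?a j) \<le> Re (cinner D x (S x))" for n
  proof -
    have "Re (cinner D x (S x)) = (\<Sum>j<n. ?a j) + Re (cinner D x (rn S n x))"
      using rn_telescope[OF S x, of n] by simp
    moreover have "0 \<le> Re (cinner D x (rn S n x))" using rn_bounds[OF S b x] by blast
    ultimately show ?thesis by simp
  qed
  have lower: "Re (cinner D x (B (S x))) \<ge> - (l2norm D (B x) * l2norm D (rn S n x))" for n
  proof -
    have "Re (cinner D x (B (S x))) = (\<Sum>j<n. Re (cinner D (rn S j x) (B (rn S j x)))) + Re (cinner D x (B (rn S n x)))"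
      using rn_telescope_B[OF S x B c, of n] by simp
    moreover have "0 \<le> (\<Sum>j<n. Re (cinner D (rn S j x) (B (rn S j x))))"
      by (rule sum_nonneg) (use Bpos mem in blast)
    moreover have "Re (cinner D x (B (rn S n x))) = Re (cinner D (B x) (rn S n x))"
      using sa_ip[OF B x mem] by simp
    moreover have "\<bar>Re (cinner D (B x) (rn S n x))\<bar> \<le> l2norm D (B x) * l2norm D (rn S n x)"
      using abs_Re_le_cmod[of "cinner D (B x) (rn S n x)"] ip_cs[OF Bx mem[of n]] by linarith
    ultimately show ?thesis by linarith
  qed
  show ?thesis
  proof (rule ccontr)
    assume "\<not> ?thesis"
    then have neg: "Re (cinner D x (B (S x))) < 0" by simp
    define M where "M = l2norm D (B x) + 1"
    have M: "0 < M" unfolding M_def using l2norm_nonneg[of D "B x"] by linarith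
    define e where "e = (- Re (cinner D x (B (S x))) / M)^2"
    have e: "0 < e" unfolding e_def using neg M by simp
    obtain j where j: "?a j < e"
      using small_term[of ?a, OF _ bd e] ip_self_nonneg[OF mem] by blast
    have "(l2norm D (rn S j x))^2 < e" using j ip_self_Re[OF mem] by simp
    then have "l2norm D (rn S j x) < - Re (cinner D x (B (S x))) / M"
    proof -
      have pos: "0 < (- Re (cinner D x (B (S x)))) / M" by (rule divide_pos_pos) (use neg M in auto)
      show ?thesis unfolding e_def
        by (rule power_less_imp_less_base[of _ 2]) (use pos \<open>(l2norm D (rn S j x))^2 < e\<close> e_def in auto)
    qed
    then have "M * l2norm D (rn S j x) < - Re (cinner D x (B (S x)))"
      using M by (simp add: field_simps)
    moreover have "l2norm D (B x) * l2norm D (rn S j x) \<le> M * l2norm D (rn S j x)"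
      unfolding M_def using l2norm_nonneg by (simp add: mult_right_mono)
    ultimately show False using lower[of j] by linarith
  qed
qed

lemma product_pos:
  assumes T: "psd D T" and K: "0 < K" and Tb: "\<And>z. z \<in> l2 D \<Longrightarrow> Re (cinner D z (T z)) \<le> K * Re (cinner D z z)"
    and B: "psd D B" and c: "\<And>x. x \<in> l2 D \<Longrightarrow> B (T x) = T (B x)"
    and x: "x \<in> l2 D"
  shows "0 \<le> Re (cinner D x (B (T x)))"
proof -
  define S where "S = (\<lambda>x k. of_real (1/K) * T x k)"
  have TS: "sa D T" using T psd_sa by blast
  have LT: "lop D T" using TS sa_lop by blast
  have BS: "sa D B" using B psd_sa by blast
  have LB: "lop D B" using BS sa_lop by blast
  have SS: "sa D S" unfolding S_def using sa_smul[OF TS] .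
  have Sz: "cinner D z (S z) = of_real (1/K) * cinner D z (T z)" for z
    unfolding S_def by (rule ip_scale_right)
  have b: "0 \<le> Re (cinner D z (S z)) \<and> Re (cinner D z (S z)) \<le> Re (cinner D z z)" if z: "z \<in> l2 D" for z
    using psd_nonneg[OF T z] Tb[OF z] K unfolding Sz by (simp add: field_simps)
  have cS: "B (S x) = S (B x)" if z: "x \<in> l2 D" for x
    unfolding S_def by (simp only: lop_scale[OF LB lop_mem[OF LT z]] c[OF z])
  have "0 \<le> Re (cinner D x (B (S x)))"
    by (rule product_pos_scaled[OF SS b BS cS x]) (use B psd_nonneg in auto)
  moreover have BSx: "B (S x) = (\<lambda>k. of_real (1/K) * B (T x) k)"
    unfolding S_def by (simp only: lop_scale[OF LB lop_mem[OF LT x]])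
  have "Re (cinner D x (B (S x))) = (1/K) * Re (cinner D x (B (T x)))"
    unfolding BSx ip_scale_right by simp
  ultimately have "0 \<le> (1/K) * Re (cinner D x (B (T x)))" by simp
  then show ?thesis using K by (simp add: zero_le_divide_iff)
qed

lemma lop_neg: "lop D T \<Longrightarrow> x \<in> l2 D \<Longrightarrow> T (\<lambda>k. - x k) = (\<lambda>k. - T x k)"
  using lop_scale[of D T x "-1"] by simp

lemma commute_lemma:
  assumes A: "sa D A" and P: "psd D P" and K: "0 < K"
    and Kb: "\<And>z. z \<in> l2 D \<Longrightarrow> Re (cinner D z (P z)) \<le> K * Re (cinner D z z)"
    and PA: "\<And>x. x \<in> l2 D \<Longrightarrow> P (P x) = A (A x)"
    and x: "x \<in> l2 D"
  shows "P (A x) = A (P x)"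
proof -
  have LA: "lop D A" using A sa_lop by blast
  have SP: "sa D P" using P psd_sa by blast
  have LP: "lop D P" using SP sa_lop by blast
  define X where "X = (\<lambda>x k. P (A x) k - A (P x) k)"
  have LX: "lop D X" unfolding X_def by (rule lop_sub[OF lop_comp[OF LP LA] lop_comp[OF LA LP]])
  have mA: "\<And>v. v \<in> l2 D \<Longrightarrow> A v \<in> l2 D" using LA lop_mem by blast
  have mP: "\<And>v. v \<in> l2 D \<Longrightarrow> P v \<in> l2 D" using LP lop_mem by blast
  have mX: "\<And>v. v \<in> l2 D \<Longrightarrow> X v \<in> l2 D" using LX lop_mem by blast
  have skew: "cinner D u (X v) = - cinner D (X u) v" if u: "u \<in> l2 D" and v: "v \<in> l2 D" for u v
  proof -
    have "cinner D u (X v) = cinner D u (P (A v)) - cinner D u (A (P v))"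
      unfolding X_def using ip_diff_right[OF u mP[OF mA[OF v]] mA[OF mP[OF v]]] .
    also have "cinner D u (P (A v)) = cinner D (A (P u)) v"
      using sa_ip[OF SP u mA[OF v]] sa_ip[OF A mP[OF u] v] by simp
    also have "cinner D u (A (P v)) = cinner D (P (A u)) v"
      using sa_ip[OF A u mP[OF v]] sa_ip[OF SP mA[OF u] v] by simp
    also have "cinner D (X u) v = cinner D (P (A u)) v - cinner D (A (P u)) v"
      unfolding X_def using ip_diff_left[OF v mP[OF mA[OF u]] mA[OF mP[OF u]]] .
    ultimately show ?thesis by simp
  qed
  have anti: "P (X v) = (\<lambda>k. - X (P v) k)" if v: "v \<in> l2 D" for v
  proof -
    have "P (X v) = (\<lambda>k. P (P (A v)) k - P (A (P v)) k)"
      unfolding X_def using lop_diff[OF LP mP[OF mA[OF v]] mA[OF mP[OF v]]] .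
    moreover have "P (P (A v)) = A (P (P v))" using PA[OF mA[OF v]] PA[OF v] by simp
    ultimately show ?thesis unfolding X_def by simp
  qed
  define Y where "Y = (\<lambda>v k. - X (X v) k)"
  have LY: "lop D Y" unfolding Y_def using lop_smul[OF lop_comp[OF LX LX], of "-1"] by simp
  have Yip: "cinner D u (Y v) = cinner D (X u) (X v)" if u: "u \<in> l2 D" and v: "v \<in> l2 D" for u v
  proof -
    have "cinner D u (Y v) = - cinner D u (X (X v))"
      unfolding Y_def using ip_scale_right[of D u "-1" "X (X v)"] by simp
    then show ?thesis using skew[OF u mX[OF v]] by simp
  qed
  have SY: "sa D Y"
    unfolding sa_def using LY
  proof (intro conjI ballI)
    fix u v assume u: "u \<in> l2 D" and v: "v \<in> l2 D"
    have "cinner D (Y u) v = cnj (cinner D v (Y u))" by (rule ip_cnj)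
    also have "\<dots> = cnj (cinner D (X v) (X u))" using Yip[OF v u] by simp
    also have "\<dots> = cinner D (X u) (X v)" by (rule ip_cnj[symmetric])
    finally show "cinner D u (Y v) = cinner D (Y u) v" using Yip[OF u v] by simp
  qed
  have PY: "psd D Y" unfolding psd_def using SY Yip ip_self_nonneg mX by auto
  have antiX: "X (P v) = (\<lambda>k. - P (X v) k)" if v: "v \<in> l2 D" for v
    using anti[OF v] by simp
  have cYP: "Y (P v) = P (Y v)" if v: "v \<in> l2 D" for v
  proof -
    have "X (X (P v)) = X (\<lambda>k. - P (X v) k)" using antiX[OF v] by simp
    also have "\<dots> = (\<lambda>k. - X (P (X v)) k)" using lop_neg[OF LX mP[OF mX[OF v]]] .
    also have "X (P (X v)) = (\<lambda>k. - P (X (X v)) k)" using antiX[OF mX[OF v]] .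
    finally have "X (X (P v)) = P (X (X v))" by simp
    then show ?thesis unfolding Y_def using lop_neg[OF LP mX[OF mX[OF v]]] by simp
  qed
  have key: "P (X v) = (\<lambda>k. 0)" if v: "v \<in> l2 D" for v
  proof -
    have "0 \<le> Re (cinner D v (Y (P v)))"
      by (rule product_pos[OF P K Kb PY _ v]) (use cYP in auto)
    moreover have "cinner D v (Y (P v)) = cinner D (X v) (X (P v))" using Yip[OF v mP[OF v]] .
    moreover have "cinner D (X v) (\<lambda>k. - P (X v) k) = - cinner D (X v) (P (X v))"
      using ip_scale_right[of D "X v" "-1" "P (X v)"] by simp
    ultimately have "Re (cinner D (X v) (P (X v))) \<le> 0" using antiX[OF v] by simp
    moreover have "0 \<le> Re (cinner D (X v) (P (X v)))" using psd_nonneg[OF P mX[OF v]] .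
    ultimately have "Re (cinner D (X v) (P (X v))) = 0" by simp
    then show ?thesis using psd_kernel[OF P mX[OF v]] by simp
  qed
  have key2: "X (P v) = (\<lambda>k. 0)" if v: "v \<in> l2 D" for v
    using antiX[OF v] key[OF v] by simp
  have PAX: "P (A (X x)) = (\<lambda>k. 0)"
  proof -
    have d: "P (A (X x)) = (\<lambda>k. P (A (P (A x))) k - P (A (A (P x))) k)"
      unfolding X_def using lop_diff[OF LA mP[OF mA[OF x]] mA[OF mP[OF x]]]
        lop_diff[OF LP mA[OF mP[OF mA[OF x]]] mA[OF mA[OF mP[OF x]]]] by simp
    have "\<forall>k. P (A (P (A x))) k = A (P (P (A x))) k"
      using key2[OF mA[OF x]] unfolding X_def by (simp add: fun_eq_iff)
    then have "P (A (P (A x))) = A (P (P (A x)))" by (simp add: fun_eq_iff)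
    also have "\<dots> = A (A (A (A x)))" by (simp only: PA[OF mA[OF x]])
    also have "\<dots> = P (P (A (A x)))" by (simp only: PA[OF mA[OF mA[OF x]], symmetric])
    also have "\<dots> = P (P (P (P x)))" by (simp only: PA[OF x, symmetric])
    finally have e1: "P (A (P (A x))) = P (P (P (P x)))" .
    have e2: "P (A (A (P x))) = P (P (P (P x)))" by (simp only: PA[OF mP[OF x], symmetric])
    show ?thesis unfolding d e1 e2 by simp
  qed
  have Xx: "X x = (\<lambda>k. P (A x) k - A (P x) k)" by (simp add: X_def)
  have "cinner D (X x) (X x) = cinner D (X x) (P (A x)) - cinner D (X x) (A (P x))"
    unfolding Xx[symmetric] using ip_diff_right[OF mX[OF x] mP[OF mA[OF x]] mA[OF mP[OF x]]] Xx by simp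
  also have "cinner D (X x) (P (A x)) = cinner D (P (X x)) (A x)" using sa_ip[OF SP mX[OF x] mA[OF x]] .
  also have "\<dots> = 0" using key[OF x] unfolding cinner_def by simp
  also have "cinner D (X x) (A (P x)) = cinner D (P (A (X x))) x"
    using sa_ip[OF A mX[OF x] mP[OF x]] sa_ip[OF SP mA[OF mX[OF x]] x] by simp
  also have "\<dots> = 0" using PAX unfolding cinner_def by simp
  finally have "cinner D (X x) (X x) = 0" by simp
  then have "X x = (\<lambda>k. 0)" using ip_self_zero[OF mX[OF x]] by simp
  then show ?thesis unfolding X_def by (simp add: fun_eq_iff)
qed

lemma lop_funpow: "lop D G \<Longrightarrow> lop D (G ^^ j)"
proof (induction j)
  case 0 then show ?case using lop_id by (simp add: id_def)
next
  case (Suc j)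
  have "lop D (\<lambda>x. G ((G ^^ j) x))" by (rule lop_comp[OF Suc.prems Suc.IH[OF Suc.prems]])
  then show ?case by (simp add: comp_def)
qed

lemma funpow_comm:
  assumes G: "lop D G" and c: "\<And>v. v \<in> l2 D \<Longrightarrow> B (G v) = G (B v)"
  shows "v \<in> l2 D \<Longrightarrow> B ((G ^^ j) v) = (G ^^ j) (B v)"
proof (induction j)
  case 0 then show ?case by simp
next
  case (Suc j)
  have m: "(G ^^ j) v \<in> l2 D" using lop_funpow[OF G] lop_mem Suc.prems by blast
  show ?case using c[OF m] Suc.IH[OF Suc.prems] by simp
qed

lemma sa_funpow: "sa D G \<Longrightarrow> sa D (G ^^ j)"
proof (induction j)
  case 0 then show ?case using sa_id by (simp add: id_def)
next
  case (Suc j)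
  have "sa D (\<lambda>x. G ((G ^^ j) x))"
    by (rule sa_comp[OF Suc.prems Suc.IH[OF Suc.prems]]) (simp add: funpow_swap1)
  then show ?case by (simp add: comp_def)
qed

lemma main_ineq:
  assumes A: "sa D A" and P: "psd D P" and K: "0 < K"
    and Kb: "\<And>z. z \<in> l2 D \<Longrightarrow> Re (cinner D z (P z)) \<le> K * Re (cinner D z z)"
    and PA: "\<And>x. x \<in> l2 D \<Longrightarrow> P (P x) = A (A x)"
    and x: "x \<in> l2 D"
  shows "Re (cinner D x (A x)) \<le> Re (cinner D x (P x))"
proof -
  have LA: "lop D A" using A sa_lop by blast
  have SP: "sa D P" using P psd_sa by blast
  have LP: "lop D P" using SP sa_lop by blast
  have mA: "\<And>v. v \<in> l2 D \<Longrightarrow> A v \<in> l2 D" using LA lop_mem by blast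
  have mP: "\<And>v. v \<in> l2 D \<Longrightarrow> P v \<in> l2 D" using LP lop_mem by blast
  have comm: "\<And>v. v \<in> l2 D \<Longrightarrow> P (A v) = A (P v)"
    using commute_lemma[OF A P K Kb PA] by blast
  define c where "c = 1 / K"
  have c: "0 < c" unfolding c_def using K by simp
  define G where "G = (\<lambda>v k. v k - of_real c * P v k)"
  have SG: "sa D G" unfolding G_def using sa_sub[OF sa_id sa_smul[OF SP, of c]] by simp
  have LG: "lop D G" using SG sa_lop by blast
  have mG: "\<And>v. v \<in> l2 D \<Longrightarrow> G v \<in> l2 D" using LG lop_mem by blast
  have Gip: "cinner D v (G v) = cinner D v v - of_real c * cinner D v (P v)" if v: "v \<in> l2 D" for v
    unfolding G_def using ip_diff_right[OF v v l2_scale[OF mP[OF v]]] ip_scale_right by simp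
  have GP: "G (P v) = P (G v)" if v: "v \<in> l2 D" for v
    unfolding G_def using lop_diff[OF LP v l2_scale[OF mP[OF v]]] lop_scale[OF LP mP[OF v]] by simp
  have GA: "A (G v) = G (A v)" if v: "v \<in> l2 D" for v
    unfolding G_def using lop_diff[OF LA v l2_scale[OF mP[OF v]]] lop_scale[OF LA mP[OF v]] comm[OF v] by simp
  have PG: "psd D G" unfolding psd_def
  proof (intro conjI SG ballI)
    fix v assume v: "v \<in> l2 D"
    have "c * Re (cinner D v (P v)) \<le> Re (cinner D v v)"
      using Kb[OF v] K unfolding c_def by (simp add: field_simps)
    then show "0 \<le> Re (cinner D v (G v))" using Gip[OF v] by simp
  qed
  have Gle: "Re (cinner D v (G v)) \<le> 1 * Re (cinner D v v)" if v: "v \<in> l2 D" for v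
    using Gip[OF v] psd_nonneg[OF P v] c by simp
  define gp where "gp = (\<lambda>j. G ^^ j)"
  have Sgp: "sa D (gp j)" for j unfolding gp_def using sa_funpow[OF SG] .
  have Lgp: "lop D (gp j)" for j using Sgp sa_lop by blast
  have mgp: "\<And>v. v \<in> l2 D \<Longrightarrow> gp j v \<in> l2 D" for j using Lgp lop_mem by blast
  have gpP: "P (gp j v) = gp j (P v)" if v: "v \<in> l2 D" for v j
    unfolding gp_def by (rule funpow_comm[OF LG _ v]) (use GP in auto)
  have gpA: "A (gp j v) = gp j (A v)" if v: "v \<in> l2 D" for v j
    unfolding gp_def by (rule funpow_comm[OF LG _ v]) (use GA in auto)
  have gpG: "G (gp j v) = gp j (G v)" if v: "v \<in> l2 D" for v j
    unfolding gp_def by (rule funpow_comm[OF LG _ v]) auto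
  have gpSuc: "gp (Suc j) v = G (gp j v)" for j v unfolding gp_def by simp
  define F where "F = (\<lambda>j v. gp j (P v))"
  have mF: "\<And>v. v \<in> l2 D \<Longrightarrow> F j v \<in> l2 D" for j unfolding F_def using mgp mP by blast
  have gpSuc2: "gp (Suc j) v = (\<lambda>k. gp j v k - of_real c * F j v k)" if v: "v \<in> l2 D" for j v
    unfolding gpSuc F_def G_def using gpP[OF v] by simp
  have psd_gp: "psd D (gp j) \<and> (\<forall>v\<in>l2 D. Re (cinner D v (gp j v)) \<le> Re (cinner D v v))" for j
  proof (induction j)
    case 0 then show ?case unfolding gp_def using psd_id by (simp add: id_def)
  next
    case (Suc j)
    have Pj: "psd D (gp j)" using Suc.IH by blast
    have nn: "0 \<le> Re (cinner D v (gp (Suc j) v))" if v: "v \<in> l2 D" for v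
    proof -
      have "0 \<le> Re (cinner D v (gp j (G v)))"
        by (rule product_pos[OF PG zero_less_one Gle Pj _ v]) (use gpG in auto)
      then show ?thesis using gpSuc gpG[OF v] by simp
    qed
    have ub: "Re (cinner D v (gp (Suc j) v)) \<le> Re (cinner D v v)" if v: "v \<in> l2 D" for v
    proof -
      have "0 \<le> Re (cinner D v (gp j (P v)))"
        by (rule product_pos[OF P K Kb Pj _ v]) (use gpP in auto)
      moreover have "cinner D v (gp (Suc j) v) = cinner D v (gp j v) - of_real c * cinner D v (F j v)"
        unfolding gpSuc2[OF v] using ip_diff_right[OF v mgp[OF v] l2_scale[OF mF[OF v]]] ip_scale_right by simp
      ultimately have "Re (cinner D v (gp (Suc j) v)) \<le> Re (cinner D v (gp j v))"
        using c unfolding F_def by simp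
      then show ?thesis using Suc.IH v by fastforce
    qed
    show ?case unfolding psd_def using Sgp nn ub by blast
  qed
  have Pgp: "psd D (gp j)" for j using psd_gp by blast
  have gple: "Re (cinner D v (gp j v)) \<le> 1 * Re (cinner D v v)" if v: "v \<in> l2 D" for v j
    using psd_gp v by simp
  have PF: "psd D (F j)" for j
  proof -
    have "sa D (\<lambda>v. gp j (P v))" by (rule sa_comp[OF Sgp SP]) (use gpP in auto)
    moreover have "0 \<le> Re (cinner D v (gp j (P v)))" if v: "v \<in> l2 D" for v
      by (rule product_pos[OF P K Kb Pgp _ v]) (use gpP in auto)
    ultimately show ?thesis unfolding psd_def F_def by blast
  qed
  have Fip: "cinner D v (gp (Suc j) v) = cinner D v (gp j v) - of_real c * cinner D v (F j v)" if v: "v \<in> l2 D" for v j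
    unfolding gpSuc2[OF v] using ip_diff_right[OF v mgp[OF v] l2_scale[OF mF[OF v]]] ip_scale_right by simp
  have Fle: "Re (cinner D v (F j v)) \<le> K * Re (cinner D v v)" if v: "v \<in> l2 D" for v j
  proof -
    have "c * Re (cinner D v (F j v)) = Re (cinner D v (gp j v)) - Re (cinner D v (gp (Suc j) v))"
      using Fip[OF v] by simp
    also have "\<dots> \<le> Re (cinner D v v)" using gple[OF v, of j] psd_nonneg[OF Pgp[of "Suc j"] v] by simp
    finally show ?thesis using K unfolding c_def by (simp add: field_simps)
  qed
  have tele: "Re (cinner D x x) - Re (cinner D x (gp m x)) = (\<Sum>j<m. c * Re (cinner D x (F j x)))" for m
  proof (induction m)
    case 0 then show ?case unfolding gp_def by simp
  next
    case (Suc m) then show ?case using Fip[OF x, of m] by simp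
  qed
  have sbound: "(\<Sum>j<m. c * Re (cinner D x (F j x))) \<le> Re (cinner D x x)" for m
    using tele[of m] psd_nonneg[OF Pgp x, of m] by simp
  define U where "U = (\<lambda>v k. P v k - A v k)"
  have SU: "sa D U" unfolding U_def by (rule sa_sub[OF SP A])
  have LU: "lop D U" using SU sa_lop by blast
  have mU: "\<And>v. v \<in> l2 D \<Longrightarrow> U v \<in> l2 D" using LU lop_mem by blast
  have UP: "U (P v) = P (U v)" if v: "v \<in> l2 D" for v
    unfolding U_def using lop_diff[OF LP mP[OF v] mA[OF v]] comm[OF v] by simp
  have UA: "U (A v) = A (U v)" if v: "v \<in> l2 D" for v
    unfolding U_def using lop_diff[OF LA mP[OF v] mA[OF v]] comm[OF v] by simp
  have UG: "U (G v) = G (U v)" if v: "v \<in> l2 D" for v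
    unfolding U_def using GA[OF v] lop_diff[OF LG mP[OF v] mA[OF v]] GP[OF v] by simp
  have Ugp: "U (gp j v) = gp j (U v)" if v: "v \<in> l2 D" for v j
    unfolding gp_def by (rule funpow_comm[OF LG _ v]) (use UG in auto)
  have UU: "U (U v) = (\<lambda>k. 2 * P (U v) k)" if v: "v \<in> l2 D" for v
  proof -
    have "A (U v) = (\<lambda>k. A (P v) k - A (A v) k)" unfolding U_def using lop_diff[OF LA mP[OF v] mA[OF v]] .
    also have "\<dots> = (\<lambda>k. P (A v) k - P (P v) k)" using comm[OF v] PA[OF v] by simp
    finally have a: "A (U v) = (\<lambda>k. P (A v) k - P (P v) k)" .
    have p: "P (U v) = (\<lambda>k. P (P v) k - P (A v) k)" unfolding U_def using lop_diff[OF LP mP[OF v] mA[OF v]] .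
    have Uapp: "U w = (\<lambda>k. P w k - A w k)" for w by (simp add: U_def)
    show ?thesis by (subst Uapp[of "U v"]) (simp add: a p fun_eq_iff)
  qed
  define B1 where "B1 = (\<lambda>v. U (P v))"
  have PB1: "psd D B1" unfolding psd_def
  proof (intro conjI ballI)
    show "sa D B1" unfolding B1_def by (rule sa_comp[OF SU SP]) (use UP in auto)
    fix v assume v: "v \<in> l2 D"
    have e: "cinner D v (B1 v) = cinner D v (P (P v)) - cinner D v (A (P v))"
      unfolding B1_def U_def using ip_diff_right[OF v mP[OF mP[OF v]] mA[OF mP[OF v]]] by simp
    have e1: "cinner D v (P (P v)) = cinner D (P v) (P v)" using sa_ip[OF SP v mP[OF v]] .
    have e2: "cinner D v (A (P v)) = cinner D (A v) (P v)" using sa_ip[OF A v mP[OF v]] .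
    have "cinner D (A v) (A v) = cinner D (P v) (P v)"
      using sa_ip[OF A v mA[OF v]] sa_ip[OF SP v mP[OF v]] PA[OF v] by simp
    then have nrm: "l2norm D (A v) = l2norm D (P v)"
      using ip_self_Re[OF mA[OF v]] ip_self_Re[OF mP[OF v]] l2norm_nonneg
      by (metis power2_eq_iff_nonneg)
    have "Re (cinner D (A v) (P v)) \<le> l2norm D (A v) * l2norm D (P v)"
      using abs_Re_le_cmod[of "cinner D (A v) (P v)"] ip_cs[OF mA[OF v] mP[OF v]] by linarith
    also have "\<dots> = Re (cinner D (P v) (P v))" using nrm ip_self_Re[OF mP[OF v]] by (simp add: power2_eq_square)
    finally show "0 \<le> Re (cinner D v (B1 v))" using e e1 e2 by simp
  qed
  have B1gp: "B1 (gp j v) = gp j (B1 v)" if v: "v \<in> l2 D" for v j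
    unfolding B1_def using gpP[OF v] Ugp[OF mP[OF v]] by simp
  have mono: "Re (cinner D x (U (gp j x))) \<le> Re (cinner D x (U x))" for j
  proof (induction j)
    case 0 then show ?case unfolding gp_def by simp
  next
    case (Suc j)
    have "U (gp (Suc j) x) = (\<lambda>k. U (gp j x) k - of_real c * U (F j x) k)"
      unfolding gpSuc2[OF x] using lop_diff[OF LU mgp[OF x] l2_scale[OF mF[OF x]]] lop_scale[OF LU mF[OF x]] by simp
    then have "cinner D x (U (gp (Suc j) x)) = cinner D x (U (gp j x)) - of_real c * cinner D x (U (F j x))"
      using ip_diff_right[OF x mU[OF mgp[OF x]] l2_scale[OF mU[OF mF[OF x]]]] ip_scale_right by simp
    moreover have "U (F j x) = B1 (gp j x)" unfolding F_def B1_def using gpP[OF x] by simp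
    moreover have "0 \<le> Re (cinner D x (B1 (gp j x)))"
      by (rule product_pos[OF Pgp zero_less_one gple PB1 _ x]) (use B1gp in auto)
    ultimately have "Re (cinner D x (U (gp (Suc j) x))) = Re (cinner D x (U (gp j x))) - c * Re (cinner D x (B1 (gp j x)))"
      and "0 \<le> c * Re (cinner D x (B1 (gp j x)))" using c by simp_all
    then show ?case using Suc.IH by linarith
  qed
  show ?thesis
  proof (rule ccontr)
    assume "\<not> ?thesis"
    then have neg: "Re (cinner D x (U x)) < 0"
      unfolding U_def using ip_diff_right[OF x mP[OF x] mA[OF x]] by simp
    define r where "r = - Re (cinner D x (U x))"
    have r: "0 < r" unfolding r_def using neg by simp
    define N where "N = Re (cinner D x x)"
    define M where "M = Re (cinner D (U x) (U x))"
    have N: "0 \<le> N" unfolding N_def using ip_self_nonneg[OF x] .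
    have M: "0 \<le> M" unfolding M_def using ip_self_nonneg[OF mU[OF x]] .
    define Q where "Q = 4 * N^2 * K * M"
    have Q: "0 \<le> Q" unfolding Q_def using N M K by simp
    define e where "e = c * (r^4 / (Q + 1))"
    have e: "0 < e" unfolding e_def using c r Q by simp
    obtain j where j: "c * Re (cinner D x (F j x)) < e"
      using small_term[of "\<lambda>j. c * Re (cinner D x (F j x))", OF _ sbound e] psd_nonneg[OF PF x] c by auto
    define s where "s = Re (cinner D x (F j x))"
    have s0: "0 \<le> s" unfolding s_def using psd_nonneg[OF PF x] .
    have s: "s < r^4 / (Q + 1)"
    proof -
      have "c * s < c * (r^4 / (Q + 1))" using j unfolding e_def s_def .
      then show ?thesis using c by (simp only: mult_less_cancel_left_pos)
    qed
    define \<alpha> where "\<alpha> = cmod (cinner D x (U (gp j x)))"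
    define \<beta> where "\<beta> = Re (cinner D (U x) (gp j (U x)))"
    define \<gamma> where "\<gamma> = cmod (cinner D x (F j (U x)))"
    have ra: "r \<le> \<alpha>"
      using mono[of j] abs_Re_le_cmod[of "cinner D x (U (gp j x))"] unfolding r_def \<alpha>_def by linarith
    have a2: "\<alpha>^2 \<le> N * \<beta>"
    proof -
      have "\<alpha>^2 \<le> Re (cinner D x (gp j x)) * \<beta>"
        unfolding \<alpha>_def \<beta>_def Ugp[OF x] using psd_cs[OF Pgp x mU[OF x]] .
      moreover have "Re (cinner D x (gp j x)) \<le> N" unfolding N_def using gple[OF x] by simp
      moreover have "0 \<le> \<beta>" unfolding \<beta>_def using psd_nonneg[OF Pgp mU[OF x]] .
      ultimately show ?thesis by (meson mult_right_mono order_trans)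
    qed
    have b: "\<beta> \<le> 2 * \<gamma>"
    proof -
      have "cinner D (U x) (gp j (U x)) = cinner D x (U (gp j (U x)))"
        using sa_ip[OF SU x mgp[OF mU[OF x]]] by simp
      also have "U (gp j (U x)) = gp j (U (U x))" using Ugp[OF mU[OF x]] .
      also have "U (U x) = (\<lambda>k. 2 * P (U x) k)" using UU[OF x] .
      also have "gp j (\<lambda>k. 2 * P (U x) k) = (\<lambda>k. 2 * F j (U x) k)"
        unfolding F_def using lop_scale[OF Lgp mP[OF mU[OF x]]] by simp
      finally have "cinner D (U x) (gp j (U x)) = 2 * cinner D x (F j (U x))"
        using ip_scale_right by simp
      then show ?thesis unfolding \<beta>_def \<gamma>_def
        using abs_Re_le_cmod[of "cinner D x (F j (U x))"] by simp
    qed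
    have g2: "\<gamma>^2 \<le> s * (K * M)"
    proof -
      have "\<gamma>^2 \<le> s * Re (cinner D (U x) (F j (U x)))"
        unfolding \<gamma>_def s_def using psd_cs[OF PF x mU[OF x]] .
      moreover have "Re (cinner D (U x) (F j (U x))) \<le> K * M" unfolding M_def using Fle[OF mU[OF x]] .
      ultimately show ?thesis using s0 by (meson mult_left_mono order_trans)
    qed
    have "r^4 \<le> \<alpha>^4" using ra r by (simp add: power_mono)
    also have "\<alpha>^4 = (\<alpha>^2)^2" by simp
    also have "\<dots> \<le> (N * \<beta>)^2"
      by (rule power_mono[OF a2]) simp
    also have "\<dots> \<le> (N * (2 * \<gamma>))^2"
    proof -
      have "0 \<le> \<beta>" unfolding \<beta>_def using psd_nonneg[OF Pgp mU[OF x]] .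
      then show ?thesis using b N by (simp add: power_mono mult_left_mono)
    qed
    also have "\<dots> = 4 * N^2 * \<gamma>^2" by (simp add: power_mult_distrib)
    also have "\<dots> \<le> 4 * N^2 * (s * (K * M))" using g2 N by (simp add: mult_left_mono)
    also have "\<dots> = Q * s" unfolding Q_def by simp
    also have "\<dots> \<le> Q * (r^4 / (Q + 1))" using s Q by (intro mult_left_mono) simp_all
    also have "\<dots> < r^4" using Q r by (simp add: field_simps)
    finally show False by simp
  qed
qed

lemma zero_in_hull:
  fixes S :: "(real^'n) set"
  assumes ne: "S \<noteq> {}" and Q: "\<And>c. (\<forall>x\<in>S. 0 \<le> c \<bullet> x) \<Longrightarrow> (\<forall>x\<in>S. c \<bullet> x = 0)"
  shows "0 \<in> convex hull S"
proof (rule ccontr)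
  assume n: "0 \<notin> convex hull S"
  have cv: "convex (convex hull S)" by (rule convex_convex_hull)
  have ne2: "convex hull S \<noteq> {}" using ne by simp
  obtain a where a: "a \<in> span (convex hull S)" "a \<noteq> 0" "\<And>x. x \<in> convex hull S \<Longrightarrow> 0 \<le> a \<bullet> x"
    using separating_hyperplane_set_0_inspan[OF cv ne2 n] by blast
  have sub: "S \<subseteq> convex hull S" by (rule hull_subset)
  have "\<forall>x\<in>S. 0 \<le> a \<bullet> x"
  proof
    fix x assume "x \<in> S"
    then have "x \<in> convex hull S" using sub by (rule subsetD[rotated])
    then show "0 \<le> a \<bullet> x" by (rule a(3))
  qed
  then have z: "\<forall>x\<in>S. a \<bullet> x = 0" by (rule Q)
  have "convex hull S \<subseteq> span S"
    by (rule hull_minimal[of S "span S" convex, OF span_superset subspace_imp_convex[OF subspace_span]])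
  then have "span (convex hull S) \<subseteq> span S" by (rule span_minimal[OF _ subspace_span])
  then have aS: "a \<in> span S" using a(1) by blast
  have "orthogonal a a" by (rule orthogonal_to_span[OF aS]) (use z in \<open>simp add: orthogonal_def\<close>)
  then show False using a(2) by (simp add: orthogonal_def)
qed

lemma has_sum_finite_sum:
  fixes f :: "'i \<Rightarrow> nat \<Rightarrow> real"
  assumes "finite I" "\<And>i. i \<in> I \<Longrightarrow> (f i has_sum a i) A"
  shows "((\<lambda>k. \<Sum>i\<in>I. f i k) has_sum (\<Sum>i\<in>I. a i)) A"
  using assms
proof (induction I rule: finite_induct)
  case empty then show ?case by simp
next
  case (insert j I)
  have "((\<lambda>k. f j k + (\<Sum>i\<in>I. f i k)) has_sum (a j + (\<Sum>i\<in>I. a i))) A"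
    by (rule has_sum_add) (use insert in auto)
  then show ?case using insert by simp
qed

lemma bounded_lop: "bounded_op D T \<Longrightarrow> lop D T"
  unfolding bounded_op_def lop_def by blast

lemma sadj_sa: "self_adjoint_op D A \<Longrightarrow> sa D A"
  unfolding self_adjoint_op_def sa_def is_adjoint_def using bounded_lop by blast

lemma form_expand_gen:
  assumes L: "lop D T" and x: "x \<in> l2 D" and y: "y \<in> l2 D"
  shows "cinner D (\<lambda>k. x k + s * y k) (T (\<lambda>k. x k + s * y k)) =
         cinner D x (T x) + s * cinner D x (T y) + cnj s * (cinner D y (T x) + s * cinner D y (T y))"
proof -
  have sy: "(\<lambda>k. s * y k) \<in> l2 D" using y l2_scale by blast
  have Tz: "T (\<lambda>k. x k + s * y k) = (\<lambda>k. T x k + s * T y k)"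
    using lop_add[OF L x sy] lop_scale[OF L y] by simp
  have Tx: "T x \<in> l2 D" and Ty: "T y \<in> l2 D" using L x y lop_mem by auto
  have sTy: "(\<lambda>k. s * T y k) \<in> l2 D" using Ty l2_scale by blast
  have "cinner D (\<lambda>k. x k + s * y k) (\<lambda>k. T x k + s * T y k)
      = cinner D x (\<lambda>k. T x k + s * T y k) + cinner D (\<lambda>k. s * y k) (\<lambda>k. T x k + s * T y k)"
    using ip_add_left[OF l2_add[OF Tx sTy] x sy] by simp
  also have "\<dots> = cinner D x (T x) + s * cinner D x (T y) + cnj s * (cinner D y (T x) + s * cinner D y (T y))"
    using x y Tx sTy by (simp add: ip_add_right ip_scale_right ip_scale_left)
  finally show ?thesis using Tz by simp
qed

lemma positive_psd: "positive_op D P \<Longrightarrow> psd D P"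
proof -
  assume p: "positive_op D P"
  have L: "lop D P" using p unfolding positive_op_def using bounded_lop by blast
  have im: "\<And>z. z \<in> l2 D \<Longrightarrow> Im (cinner D z (P z)) = 0" using p unfolding positive_op_def by blast
  have nn: "\<And>z. z \<in> l2 D \<Longrightarrow> 0 \<le> Re (cinner D z (P z))" using p unfolding positive_op_def by blast
  have s: "cinner D x (P y) = cinner D (P x) y" if x: "x \<in> l2 D" and y: "y \<in> l2 D" for x y
  proof -
    define a where "a = cinner D x (P y)"
    define b where "b = cinner D y (P x)"
    have z1: "(\<lambda>k. x k + 1 * y k) \<in> l2 D" using x y by (intro l2_add l2_scale)
    have z2: "(\<lambda>k. x k + \<i> * y k) \<in> l2 D" using x y by (intro l2_add l2_scale)
    have e1: "Im (a + b) = 0"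
      using im[OF z1] form_expand_gen[OF L x y, of 1] im[OF x] im[OF y] unfolding a_def b_def by simp
    have e2: "Re (a - b) = 0"
      using im[OF z2] form_expand_gen[OF L x y, of \<i>] im[OF x] im[OF y] unfolding a_def b_def
      by (simp add: algebra_simps)
    have "b = cnj a" using e1 e2 by (simp add: complex_eq_iff)
    then have "cinner D y (P x) = cnj (cinner D x (P y))" unfolding a_def b_def .
    then show ?thesis using ip_cnj[of D "P x" y] by simp
  qed
  show ?thesis unfolding psd_def sa_def using L s nn by blast
qed

lemma basis_mem: "k \<in> D \<Longrightarrow> basis_vec k \<in> l2 D"
  unfolding l2_def basis_vec_def
proof (intro CollectI conjI allI impI)
  assume k: "k \<in> D"
  show "\<And>j. j \<notin> D \<Longrightarrow> (if j = k then 1 else 0) = (0::complex)" using k by auto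
  show "(\<lambda>j. (cmod (if j = k then 1 else 0::complex))\<^sup>2) summable_on D"
    by (rule finite_nonzero_values_imp_summable_on) (auto intro: finite_subset[of _ "{k}"])
qed

lemma basis_ip: "k \<in> D \<Longrightarrow> cinner D (basis_vec k) y = y k"
proof -
  assume k: "k \<in> D"
  have "cinner D (basis_vec k) y = (\<Sum>\<^sub>\<infinity>j\<in>{k}. cnj (basis_vec k j) * y j)"
    unfolding cinner_def by (rule infsum_cong_neutral) (use k in \<open>auto simp: basis_vec_def\<close>)
  also have "\<dots> = y k" by (simp add: basis_vec_def)
  finally show ?thesis .
qed

lemma basis_norm: "k \<in> D \<Longrightarrow> l2norm D (basis_vec k) = 1"
proof -
  assume k: "k \<in> D"
  have "(\<Sum>\<^sub>\<infinity>j\<in>D. (cmod (basis_vec k j))^2) = (\<Sum>\<^sub>\<infinity>j\<in>{k}. (cmod (basis_vec k j))^2)"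
    by (rule infsum_cong_neutral) (use k in \<open>auto simp: basis_vec_def\<close>)
  also have "\<dots> = 1" by (simp add: basis_vec_def)
  finally show ?thesis unfolding l2norm_def by simp
qed

lemma diag_summable:
  assumes SA: "sa D A" and tc: "trace_class D A"
  shows "(\<lambda>k. Re (cinner D (basis_vec k) (A (basis_vec k)))) summable_on D"
proof -
  obtain S P where bS: "bounded_op D S" and adj: "is_adjoint D A S" and pP: "positive_op D P"
    and PP: "\<forall>x\<in>l2 D. P (P x) = S (A x)"
    and sm: "(\<lambda>k. Re (cinner D (basis_vec k) (P (basis_vec k)))) summable_on D"
    using tc unfolding trace_class_def by blast
  have LA: "lop D A" using SA sa_lop by blast
  have LS: "lop D S" using bS bounded_lop by blast
  have mA: "\<And>v. v \<in> l2 D \<Longrightarrow> A v \<in> l2 D" using LA lop_mem by blast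
  have mS: "\<And>v. v \<in> l2 D \<Longrightarrow> S v \<in> l2 D" using LS lop_mem by blast
  have SAeq: "S x = A x" if x: "x \<in> l2 D" for x
  proof -
    define w where "w = (\<lambda>k. S x k - A x k)"
    have w: "w \<in> l2 D" unfolding w_def using l2_diff mS mA x by blast
    have "cinner D w w = cinner D (S x) w - cinner D (A x) w"
      unfolding w_def using ip_diff_left[OF w mS[OF x] mA[OF x]] by (simp add: w_def)
    also have "cinner D (S x) w = cinner D x (A w)" using adj x w unfolding is_adjoint_def by simp
    also have "cinner D (A x) w = cinner D x (A w)" using sa_ip[OF SA x w] by simp
    finally have "cinner D w w = 0" by simp
    then have "w = (\<lambda>k. 0)" using ip_self_zero[OF w] by simp
    then show ?thesis unfolding w_def by (simp add: fun_eq_iff)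
  qed
  have PA: "P (P x) = A (A x)" if x: "x \<in> l2 D" for x using PP x SAeq[OF mA[OF x]] by simp
  have P: "psd D P" using positive_psd[OF pP] .
  have LP: "lop D P" using P psd_sa sa_lop by blast
  have mP: "\<And>v. v \<in> l2 D \<Longrightarrow> P v \<in> l2 D" using LP lop_mem by blast
  obtain K0 where K0: "\<forall>x\<in>l2 D. l2norm D (P x) \<le> K0 * l2norm D x"
    using pP unfolding positive_op_def bounded_op_def by blast
  define K where "K = max K0 1"
  have K: "0 < K" unfolding K_def by simp
  have Kb: "Re (cinner D z (P z)) \<le> K * Re (cinner D z z)" if z: "z \<in> l2 D" for z
  proof -
    have "Re (cinner D z (P z)) \<le> l2norm D z * l2norm D (P z)"
      using abs_Re_le_cmod[of "cinner D z (P z)"] ip_cs[OF z mP[OF z]] by linarith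
    also have "\<dots> \<le> l2norm D z * (K0 * l2norm D z)"
      using K0 z l2norm_nonneg by (simp add: mult_left_mono)
    also have "\<dots> \<le> l2norm D z * (K * l2norm D z)"
      unfolding K_def using l2norm_nonneg[of D z]
      by (intro mult_left_mono mult_right_mono) auto
    also have "\<dots> = K * Re (cinner D z z)" using ip_self_Re[OF z] by (simp add: power2_eq_square)
    finally show ?thesis .
  qed
  have SnA: "sa D (\<lambda>x k. - A x k)" using sa_neg[OF SA] .
  have PnA': "P (P x) = (\<lambda>x k. - A x k) ((\<lambda>x k. - A x k) x)" if x: "x \<in> l2 D" for x
    using PA[OF x] lop_neg[OF LA mA[OF x]] by simp
  have bound: "\<bar>Re (cinner D (basis_vec k) (A (basis_vec k)))\<bar> \<le> Re (cinner D (basis_vec k) (P (basis_vec k)))"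
    if k: "k \<in> D" for k
  proof -
    have e: "basis_vec k \<in> l2 D" using basis_mem[OF k] .
    have i1: "Re (cinner D (basis_vec k) (A (basis_vec k))) \<le> Re (cinner D (basis_vec k) (P (basis_vec k)))"
      by (rule main_ineq[OF SA P K Kb PA e])
    have i2: "Re (cinner D (basis_vec k) ((\<lambda>x k. - A x k) (basis_vec k))) \<le> Re (cinner D (basis_vec k) (P (basis_vec k)))"
      by (rule main_ineq[OF SnA P K Kb PnA' e])
    have "cinner D (basis_vec k) ((\<lambda>x k. - A x k) (basis_vec k)) = - cinner D (basis_vec k) (A (basis_vec k))"
      using ip_scale_right[of D "basis_vec k" "-1" "A (basis_vec k)"] by simp
    then show ?thesis using i1 i2 by simp
  qed
  show ?thesis
    by (rule summable_compare[OF sm]) (use bound in simp)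
qed

theorem lemma3p4:
  fixes D :: "nat set"
    and A :: "'n::finite \<Rightarrow> ((nat \<Rightarrow> complex) \<Rightarrow> (nat \<Rightarrow> complex))"
  assumes "D \<noteq> {}"
    and "\<And>i. trace_class D (A i)"
    and "\<And>i. self_adjoint_op D (A i)"
    and "\<And>i. op_trace D (A i) = 0"
    and "convex (joint_numerical_range D A)"
  shows "\<exists>z\<in>l2 D. l2norm D z = 1 \<and> (\<forall>i. cinner D z (A i z) = 0)"
proof -
  have SA: "sa D (A i)" for i using assms(3) sadj_sa by blast
  have LA: "lop D (A i)" for i using SA sa_lop by blast
  define d where "d = (\<lambda>i k. Re (cinner D (basis_vec k) (A i (basis_vec k))))"
  have dsum: "d i summable_on D" for i unfolding d_def by (rule diag_summable[OF SA assms(2)])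
  have dhas: "(d i has_sum 0) D" for i
  proof -
    have "op_trace D (A i) = (\<Sum>\<^sub>\<infinity>k\<in>D. complex_of_real (d i k))"
      unfolding op_trace_def d_def
    proof (rule infsum_cong)
      fix k assume k: "k \<in> D"
      have e: "basis_vec k \<in> l2 D" using basis_mem[OF k] .
      show "cinner D (basis_vec k) (A i (basis_vec k)) = complex_of_real (Re (cinner D (basis_vec k) (A i (basis_vec k))))"
        using sa_real'[OF SA e] .
    qed
    also have "\<dots> = complex_of_real (infsum (d i) D)"
      by (rule infsumI) (rule has_sum_of_real[OF has_sum_infsum[OF dsum]])
    finally have "infsum (d i) D = 0" using assms(4)[of i] by simp
    then show ?thesis using has_sum_infsum[OF dsum[of i]] by simp
  qed
  define v where "v = (\<lambda>k. (\<chi> i. d i k) :: real^'n)"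
  define S where "S = v ` D"
  have Sne: "S \<noteq> {}" unfolding S_def using assms(1) by simp
  have Q: "\<forall>x\<in>S. c \<bullet> x = 0" if c: "\<forall>x\<in>S. 0 \<le> c \<bullet> x" for c
  proof -
    have ip: "c \<bullet> v k = (\<Sum>i\<in>UNIV. c $ i * d i k)" for k
      unfolding v_def inner_vec_def by simp
    have "((\<lambda>k. \<Sum>i\<in>UNIV. c $ i * d i k) has_sum (\<Sum>i\<in>UNIV. c $ i * 0)) D"
    proof (rule has_sum_finite_sum)
      show "finite (UNIV :: 'n set)" by simp
      fix i :: 'n
      show "((\<lambda>k. c $ i * d i k) has_sum c $ i * 0) D" by (rule has_sum_cmult_right[OF dhas])
    qed
    then have hs: "((\<lambda>k. c \<bullet> v k) has_sum 0) D" unfolding ip by simp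
    have nn: "\<And>k. k \<in> D \<Longrightarrow> 0 \<le> c \<bullet> v k" using c unfolding S_def by blast
    have "\<forall>k\<in>D. c \<bullet> v k = 0"
    proof
      fix k assume k: "k \<in> D"
      show "c \<bullet> v k = 0" by (rule nonneg_has_sum_le_0D[OF hs order_refl nn k])
    qed
    then show ?thesis unfolding S_def by blast
  qed
  have h0: "0 \<in> convex hull S" using zero_in_hull[OF Sne Q] .
  have SW: "S \<subseteq> joint_numerical_range D A"
  proof
    fix x assume "x \<in> S"
    then obtain k where k: "k \<in> D" and xk: "x = v k" unfolding S_def by (rule imageE)
    have xe: "x = (\<chi> i. Re (cinner D (basis_vec k) (A i (basis_vec k))))" unfolding xk v_def d_def by simp
    show "x \<in> joint_numerical_range D A"
      unfolding joint_numerical_range_def mem_Collect_eq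
      by (intro exI[of _ "basis_vec k"] conjI xe basis_mem[OF k] basis_norm[OF k])
  qed
  have "convex hull S \<subseteq> joint_numerical_range D A"
    by (rule hull_minimal[of S "joint_numerical_range D A" convex, OF SW assms(5)])
  then have "0 \<in> joint_numerical_range D A" using h0 by (rule subsetD)
  then have "\<exists>z. 0 = (\<chi> i. Re (cinner D z (A i z))) \<and> z \<in> l2 D \<and> l2norm D z = 1"
    unfolding joint_numerical_range_def mem_Collect_eq .
  then obtain z where z0: "0 = (\<chi> i. Re (cinner D z (A i z)))" and z: "z \<in> l2 D" "l2norm D z = 1"
    by (elim exE conjE)
  have ci: "cinner D z (A i z) = 0" for i
  proof -
    have "Re (cinner D z (A i z)) = 0" using arg_cong[OF z0, of "\<lambda>w. w $ i"] by simp
    moreover have "Im (cinner D z (A i z)) = 0" using sa_real[OF SA z(1)] .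
    ultimately show ?thesis by (simp add: complex_eq_iff)
  qed
  show ?thesis by (rule bexI[of _ z]) (use z ci in simp_all)
qed

end
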